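(* Let $f,g:\mathbb{R}^2\to\mathbb{R}$ be Lipschitz continuous. If the graphons $(J_1,W_1)$ and $(J_2,W_2)$ are isomorphic up to nullsets, then the graphon dynamical systems $\mathcal D(J_1,W_1)$ and $\mathcal D(J_2,W_2)$ are isometric, i.e. there is a bijective isometry between $L^1(J_2)$ and $L^1(J_1)$ mapping trajectories of one system to trajectories of the other.
   Context: A graphon $(J,W)$ consists of a probability space $J=(\Omega,\mathcal A,\mu)$ and a symmetric measurable $W:\Omega\times\Omega\to[0,1]$. The graphon dynamical system $\mathcal D(J,W)$ is the flow on $L^1(J)$ given by $\dot u_x=f\big(u_x,\int_J W(x,y)g(u_x,u_y)\,d\mu(y)\big)$, where for each $t$ the equation holds for almost every $x$. Two graphons $(J_1,W_1)$, $(J_2,W_2)$ are isomorphic up to nullsets if there is a measure preserving map $\varphi:J_1\to J_2$, invertible up to nullsets, with $W_1(x,y)=W_2(\varphi(x),\varphi(y))$ almost everywhere. *)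

theory Defs
  imports "HOL-Probability.Probability"
begin

definition graphon :: "'a measure \<Rightarrow> ('a \<Rightarrow> 'a \<Rightarrow> real) \<Rightarrow> bool" where
  "graphon M W \<longleftrightarrow> prob_space M \<and>
     (\<lambda>z. W (fst z) (snd z)) \<in> borel_measurable (M \<Otimes>\<^sub>M M) \<and>
     (\<forall>x\<in>space M. \<forall>y\<in>space M. W x y = W y x \<and> 0 \<le> W x y \<and> W x y \<le> 1)"

definition measure_pres :: "'a measure \<Rightarrow> 'b measure \<Rightarrow> ('a \<Rightarrow> 'b) \<Rightarrow> bool" where
  "measure_pres M N \<phi> \<longleftrightarrow> \<phi> \<in> measurable M N \<and> distr M N \<phi> = N"

definition graphon_iso_nullsets ::
  "'a measure \<Rightarrow> ('a \<Rightarrow> 'a \<Rightarrow> real) \<Rightarrow> 'b measure \<Rightarrow> ('b \<Rightarrow> 'b \<Rightarrow> real) \<Rightarrow> bool" where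
  "graphon_iso_nullsets M1 W1 M2 W2 \<longleftrightarrow>
     (\<exists>\<phi> \<psi>. measure_pres M1 M2 \<phi> \<and> measure_pres M2 M1 \<psi> \<and>
        (AE x in M1. \<psi> (\<phi> x) = x) \<and> (AE y in M2. \<phi> (\<psi> y) = y) \<and>
        (AE z in M1 \<Otimes>\<^sub>M M1. W1 (fst z) (snd z) = W2 (\<phi> (fst z)) (\<phi> (snd z))))"

definition gds_rhs ::
  "(real \<times> real \<Rightarrow> real) \<Rightarrow> (real \<times> real \<Rightarrow> real) \<Rightarrow> 'a measure \<Rightarrow> ('a \<Rightarrow> 'a \<Rightarrow> real)
     \<Rightarrow> ('a \<Rightarrow> real) \<Rightarrow> 'a \<Rightarrow> real" where
  "gds_rhs f g M W u x = f (u x, \<integral>y. W x y * g (u x, u y) \<partial>M)"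

definition L1_dist :: "'a measure \<Rightarrow> ('a \<Rightarrow> real) \<Rightarrow> ('a \<Rightarrow> real) \<Rightarrow> real" where
  "L1_dist M u v = (\<integral>x. \<bar>u x - v x\<bar> \<partial>M)"

text \<open>A trajectory of D(J,W) on the time set T: a curve t \<mapsto> u t in L^1(J), differentiable
  in L^1 (within T) with derivative equal to the right-hand side (as an element of L^1,
  i.e. almost everywhere in x).\<close>
definition gds_trajectory ::
  "(real \<times> real \<Rightarrow> real) \<Rightarrow> (real \<times> real \<Rightarrow> real) \<Rightarrow> 'a measure \<Rightarrow> ('a \<Rightarrow> 'a \<Rightarrow> real)
     \<Rightarrow> real set \<Rightarrow> (real \<Rightarrow> 'a \<Rightarrow> real) \<Rightarrow> bool" where
  "gds_trajectory f g M W T u \<longleftrightarrow>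
     (\<forall>t\<in>T. integrable M (u t)) \<and>
     (\<forall>t\<in>T. ((\<lambda>s. L1_dist M (\<lambda>x. u s x - u t x) (\<lambda>x. (s - t) * gds_rhs f g M W (u t) x) / \<bar>s - t\<bar>)
              \<longlongrightarrow> 0) (at t within T))"

text \<open>Isometry of graphon dynamical systems: a map L^1(J2) \<rightarrow> L^1(J1) (acting on representatives)
  which is a distance-preserving bijection on a.e.-classes and maps trajectories of D(J2,W2)
  to trajectories of D(J1,W1) and conversely.\<close>
definition gds_isometric ::
  "(real \<times> real \<Rightarrow> real) \<Rightarrow> (real \<times> real \<Rightarrow> real) \<Rightarrow> 'a measure \<Rightarrow> ('a \<Rightarrow> 'a \<Rightarrow> real)
     \<Rightarrow> 'b measure \<Rightarrow> ('b \<Rightarrow> 'b \<Rightarrow> real) \<Rightarrow> bool" where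
  "gds_isometric f g M1 W1 M2 W2 \<longleftrightarrow>
     (\<exists>\<Phi> :: ('b \<Rightarrow> real) \<Rightarrow> ('a \<Rightarrow> real).
        (\<forall>v. integrable M2 v \<longrightarrow> integrable M1 (\<Phi> v)) \<and>
        (\<forall>v w. integrable M2 v \<longrightarrow> integrable M2 w \<longrightarrow> L1_dist M1 (\<Phi> v) (\<Phi> w) = L1_dist M2 v w) \<and>
        (\<forall>u. integrable M1 u \<longrightarrow> (\<exists>v. integrable M2 v \<and> (AE x in M1. \<Phi> v x = u x))) \<and>
        (\<forall>T v. gds_trajectory f g M2 W2 T v \<longrightarrow> gds_trajectory f g M1 W1 T (\<lambda>t. \<Phi> (v t))) \<and>
        (\<forall>T u. gds_trajectory f g M1 W1 T u \<longrightarrow>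
            (\<exists>v. gds_trajectory f g M2 W2 T v \<and> (\<forall>t\<in>T. AE x in M1. \<Phi> (v t) x = u t x))))"

end

theory Submission
  imports Defs
begin

lemma W_sec_meas:
  assumes "(\<lambda>z. W (fst z) (snd z)) \<in> borel_measurable (M \<Otimes>\<^sub>M M)" "x \<in> space M"
  shows "W x \<in> borel_measurable M"
proof -
  have "(\<lambda>y. (\<lambda>z. W (fst z) (snd z)) (x, y)) \<in> borel_measurable M"
    by (rule measurable_compose[OF measurable_Pair1' assms(1)]) (rule assms(2))
  then show ?thesis by simp
qed

lemma rhs_meas:
  assumes P: "prob_space M" and Wm: "(\<lambda>z. W (fst z) (snd z)) \<in> borel_measurable (M \<Otimes>\<^sub>M M)"
    and cf: "continuous_on UNIV f" and cg: "continuous_on UNIV g"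
    and um: "u \<in> borel_measurable M"
  shows "gds_rhs f g M W u \<in> borel_measurable M"
proof -
  interpret prob_space M by (rule P)
  have cg': "continuous_on UNIV (\<lambda>x. g (fst x, snd x))" using cg by simp
  have cf': "continuous_on UNIV (\<lambda>x. f (fst x, snd x))" using cf by simp
  have u1: "(\<lambda>z. u (fst z)) \<in> borel_measurable (M \<Otimes>\<^sub>M M)" using um by measurable
  have u2: "(\<lambda>z. u (snd z)) \<in> borel_measurable (M \<Otimes>\<^sub>M M)" using um by measurable
  have "(\<lambda>z. g (u (fst z), u (snd z))) \<in> borel_measurable (M \<Otimes>\<^sub>M M)"
    using borel_measurable_continuous_Pair[OF u1 u2, of "\<lambda>a b. g (a, b)"] cg' by simp
  then have "(\<lambda>z. W (fst z) (snd z) * g (u (fst z), u (snd z))) \<in> borel_measurable (M \<Otimes>\<^sub>M M)"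
    using Wm by (rule borel_measurable_times[rotated])
  then have "case_prod (\<lambda>x y. W x y * g (u x, u y)) \<in> borel_measurable (M \<Otimes>\<^sub>M M)"
    by (simp add: case_prod_beta)
  then have I: "(\<lambda>x. \<integral>y. W x y * g (u x, u y) \<partial>M) \<in> borel_measurable M"
    by (rule borel_measurable_lebesgue_integral)
  show ?thesis unfolding gds_rhs_def
    using borel_measurable_continuous_Pair[OF um I, of "\<lambda>a b. f (a, b)"] cf' by simp
qed

lemma rhs_transfer:
  assumes P1: "prob_space M1" and P2: "prob_space M2"
    and Wm1: "(\<lambda>z. W1 (fst z) (snd z)) \<in> borel_measurable (M1 \<Otimes>\<^sub>M M1)"
    and Wm2: "(\<lambda>z. W2 (fst z) (snd z)) \<in> borel_measurable (M2 \<Otimes>\<^sub>M M2)"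
    and cf: "continuous_on UNIV f" and cg: "continuous_on UNIV g"
    and mp: "measure_pres M1 M2 \<phi>"
    and AEW: "AE x in M1. AE y in M1. W1 x y = W2 (\<phi> x) (\<phi> y)"
    and vm: "v \<in> borel_measurable M2"
  shows "AE x in M1. gds_rhs f g M1 W1 (\<lambda>x. v (\<phi> x)) x = gds_rhs f g M2 W2 v (\<phi> x)"
  using AEW
proof (rule AE_mp[OF _ AE_I2], intro impI)
  fix x assume x: "x \<in> space M1" and ae: "AE y in M1. W1 x y = W2 (\<phi> x) (\<phi> y)"
  have phim: "\<phi> \<in> measurable M1 M2" and dis: "distr M1 M2 \<phi> = M2" using mp by (auto simp: measure_pres_def)
  have px: "\<phi> x \<in> space M2" using phim x by (auto simp: measurable_def)
  have cg': "continuous_on UNIV (\<lambda>x. g (fst x, snd x))" using cg by simp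
  have gm: "(\<lambda>y. g (v (\<phi> x), v y)) \<in> borel_measurable M2"
    using borel_measurable_continuous_Pair[OF borel_measurable_const[where c="v (\<phi> x)" and M=M2] vm, of "\<lambda>a b. g (a, b)"] cg' by simp
  have w2m: "W2 (\<phi> x) \<in> borel_measurable M2" by (rule W_sec_meas[OF Wm2 px])
  have w1m: "W1 x \<in> borel_measurable M1" by (rule W_sec_meas[OF Wm1 x])
  have h2m: "(\<lambda>y. W2 (\<phi> x) y * g (v (\<phi> x), v y)) \<in> borel_measurable M2"
    using w2m gm by (rule borel_measurable_times)
  have h2m': "(\<lambda>y. W2 (\<phi> x) (\<phi> y) * g (v (\<phi> x), v (\<phi> y))) \<in> borel_measurable M1"
    using measurable_compose[OF phim h2m] by (simp add: comp_def)
  have gm1: "(\<lambda>y. g (v (\<phi> x), v (\<phi> y))) \<in> borel_measurable M1"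
    using measurable_compose[OF phim gm] by (simp add: comp_def)
  have h1m: "(\<lambda>y. W1 x y * g (v (\<phi> x), v (\<phi> y))) \<in> borel_measurable M1"
    using w1m gm1 by (rule borel_measurable_times)
  have "(\<integral>y. W1 x y * g (v (\<phi> x), v (\<phi> y)) \<partial>M1) = (\<integral>y. W2 (\<phi> x) (\<phi> y) * g (v (\<phi> x), v (\<phi> y)) \<partial>M1)"
    using h1m h2m' by (rule integral_cong_AE) (use ae in auto)
  also have "\<dots> = (\<integral>y. W2 (\<phi> x) y * g (v (\<phi> x), v y) \<partial>distr M1 M2 \<phi>)"
    by (rule integral_distr[OF phim h2m, symmetric])
  also have "\<dots> = (\<integral>y. W2 (\<phi> x) y * g (v (\<phi> x), v y) \<partial>M2)" using dis by simp
  finally show "gds_rhs f g M1 W1 (\<lambda>x. v (\<phi> x)) x = gds_rhs f g M2 W2 v (\<phi> x)"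
    unfolding gds_rhs_def by simp
qed

lemma traj_transfer:
  assumes P1: "prob_space M1" and P2: "prob_space M2"
    and Wm1: "(\<lambda>z. W1 (fst z) (snd z)) \<in> borel_measurable (M1 \<Otimes>\<^sub>M M1)"
    and Wm2: "(\<lambda>z. W2 (fst z) (snd z)) \<in> borel_measurable (M2 \<Otimes>\<^sub>M M2)"
    and cf: "continuous_on UNIV f" and cg: "continuous_on UNIV g"
    and mp: "measure_pres M1 M2 \<phi>"
    and AEW: "AE x in M1. AE y in M1. W1 x y = W2 (\<phi> x) (\<phi> y)"
    and tr: "gds_trajectory f g M2 W2 T v"
  shows "gds_trajectory f g M1 W1 T (\<lambda>t x. v t (\<phi> x))"
proof -
  have phim: "\<phi> \<in> measurable M1 M2" and dis: "distr M1 M2 \<phi> = M2" using mp by (auto simp: measure_pres_def)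
  have int2: "\<And>t. t \<in> T \<Longrightarrow> integrable M2 (v t)" using tr by (simp add: gds_trajectory_def)
  have vm: "\<And>t. t \<in> T \<Longrightarrow> v t \<in> borel_measurable M2" using int2 by auto
  have int1: "integrable M1 (\<lambda>x. v t (\<phi> x))" if "t \<in> T" for t
  proof -
    have "integrable (distr M1 M2 \<phi>) (v t)" using dis int2[OF that] by simp
    then show ?thesis using integrable_distr_eq[OF phim vm[OF that]] by simp
  qed
  have eq: "L1_dist M1 (\<lambda>x. v s (\<phi> x) - v t (\<phi> x)) (\<lambda>x. (s - t) * gds_rhs f g M1 W1 (\<lambda>x. v t (\<phi> x)) x)
     = L1_dist M2 (\<lambda>x. v s x - v t x) (\<lambda>x. (s - t) * gds_rhs f g M2 W2 (v t) x)"
    if s: "s \<in> T" and t: "t \<in> T" for s t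
  proof -
    have vtm1: "(\<lambda>x. v t (\<phi> x)) \<in> borel_measurable M1"
      using measurable_compose[OF phim vm[OF t]] by (simp add: comp_def)
    have vsm1: "(\<lambda>x. v s (\<phi> x)) \<in> borel_measurable M1"
      using measurable_compose[OF phim vm[OF s]] by (simp add: comp_def)
    have r1: "gds_rhs f g M1 W1 (\<lambda>x. v t (\<phi> x)) \<in> borel_measurable M1"
      by (rule rhs_meas[OF P1 Wm1 cf cg vtm1])
    have r2: "gds_rhs f g M2 W2 (v t) \<in> borel_measurable M2"
      by (rule rhs_meas[OF P2 Wm2 cf cg vm[OF t]])
    have r2': "(\<lambda>x. gds_rhs f g M2 W2 (v t) (\<phi> x)) \<in> borel_measurable M1"
      using measurable_compose[OF phim r2] by (simp add: comp_def)
    have H2: "(\<lambda>x. \<bar>v s x - v t x - (s - t) * gds_rhs f g M2 W2 (v t) x\<bar>) \<in> borel_measurable M2"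
      using vm[OF s] vm[OF t] r2 by measurable
    have "L1_dist M1 (\<lambda>x. v s (\<phi> x) - v t (\<phi> x)) (\<lambda>x. (s - t) * gds_rhs f g M1 W1 (\<lambda>x. v t (\<phi> x)) x)
      = (\<integral>x. \<bar>v s (\<phi> x) - v t (\<phi> x) - (s - t) * gds_rhs f g M2 W2 (v t) (\<phi> x)\<bar> \<partial>M1)"
      unfolding L1_dist_def
    proof (rule integral_cong_AE)
      show "(\<lambda>x. \<bar>v s (\<phi> x) - v t (\<phi> x) - (s - t) * gds_rhs f g M1 W1 (\<lambda>x. v t (\<phi> x)) x\<bar>) \<in> borel_measurable M1"
        using vsm1 vtm1 r1 by measurable
      show "(\<lambda>x. \<bar>v s (\<phi> x) - v t (\<phi> x) - (s - t) * gds_rhs f g M2 W2 (v t) (\<phi> x)\<bar>) \<in> borel_measurable M1"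
        using vsm1 vtm1 r2' by measurable
      show "AE x in M1. \<bar>v s (\<phi> x) - v t (\<phi> x) - (s - t) * gds_rhs f g M1 W1 (\<lambda>x. v t (\<phi> x)) x\<bar> =
          \<bar>v s (\<phi> x) - v t (\<phi> x) - (s - t) * gds_rhs f g M2 W2 (v t) (\<phi> x)\<bar>"
        using rhs_transfer[OF P1 P2 Wm1 Wm2 cf cg mp AEW vm[OF t]] by eventually_elim simp
    qed
    also have "\<dots> = (\<integral>x. \<bar>v s x - v t x - (s - t) * gds_rhs f g M2 W2 (v t) x\<bar> \<partial>distr M1 M2 \<phi>)"
      by (rule integral_distr[OF phim H2, symmetric])
    also have "\<dots> = L1_dist M2 (\<lambda>x. v s x - v t x) (\<lambda>x. (s - t) * gds_rhs f g M2 W2 (v t) x)"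
      using dis by (simp add: L1_dist_def)
    finally show ?thesis .
  qed
  have lim: "((\<lambda>s. L1_dist M1 (\<lambda>x. v s (\<phi> x) - v t (\<phi> x)) (\<lambda>x. (s - t) * gds_rhs f g M1 W1 (\<lambda>x. v t (\<phi> x)) x) / \<bar>s - t\<bar>)
              \<longlongrightarrow> 0) (at t within T)" if t: "t \<in> T" for t
  proof -
    have L: "((\<lambda>s. L1_dist M2 (\<lambda>x. v s x - v t x) (\<lambda>x. (s - t) * gds_rhs f g M2 W2 (v t) x) / \<bar>s - t\<bar>)
              \<longlongrightarrow> 0) (at t within T)" using tr t by (simp add: gds_trajectory_def)
    have ev: "eventually (\<lambda>s. s \<in> T) (at t within T)" by (simp add: eventually_at_filter)
    show ?thesis
      by (rule Lim_transform_eventually[OF L]) (use ev in \<open>eventually_elim\<close>, use eq t in simp)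
  qed
  show ?thesis unfolding gds_trajectory_def using int1 lim by blast
qed

theorem corollary3p13:
  fixes f g :: "real \<times> real \<Rightarrow> real"
    and M1 :: "'a measure" and W1 :: "'a \<Rightarrow> 'a \<Rightarrow> real"
    and M2 :: "'b measure" and W2 :: "'b \<Rightarrow> 'b \<Rightarrow> real"
  assumes "\<exists>L. L-lipschitz_on UNIV f"
    and "\<exists>L. L-lipschitz_on UNIV g"
    and "graphon M1 W1" and "graphon M2 W2"
    and "graphon_iso_nullsets M1 W1 M2 W2"
  shows "gds_isometric f g M1 W1 M2 W2"
proof -
  have cf: "continuous_on UNIV f" using assms(1) lipschitz_on_continuous_on by blast
  have cg: "continuous_on UNIV g" using assms(2) lipschitz_on_continuous_on by blast
  have P1: "prob_space M1" and Wm1: "(\<lambda>z. W1 (fst z) (snd z)) \<in> borel_measurable (M1 \<Otimes>\<^sub>M M1)"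
    using assms(3) by (auto simp: graphon_def)
  have P2: "prob_space M2" and Wm2: "(\<lambda>z. W2 (fst z) (snd z)) \<in> borel_measurable (M2 \<Otimes>\<^sub>M M2)"
    using assms(4) by (auto simp: graphon_def)
  obtain \<phi> \<psi> where mp: "measure_pres M1 M2 \<phi>" and mq: "measure_pres M2 M1 \<psi>"
    and pq: "AE x in M1. \<psi> (\<phi> x) = x" and qp: "AE y in M2. \<phi> (\<psi> y) = y"
    and AEW: "AE z in M1 \<Otimes>\<^sub>M M1. W1 (fst z) (snd z) = W2 (\<phi> (fst z)) (\<phi> (snd z))"
    using assms(5) unfolding graphon_iso_nullsets_def by blast
  have phim: "\<phi> \<in> measurable M1 M2" and dis: "distr M1 M2 \<phi> = M2" using mp by (auto simp: measure_pres_def)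
  have psim: "\<psi> \<in> measurable M2 M1" and dis2: "distr M2 M1 \<psi> = M1" using mq by (auto simp: measure_pres_def)
  interpret p1: prob_space M1 by (rule P1)
  interpret p11: pair_prob_space M1 M1 by unfold_locales
  have AEW1: "AE x in M1. AE y in M1. W1 x y = W2 (\<phi> x) (\<phi> y)"
    using p11.AE_pair[OF AEW] by simp
  have AEW2: "AE y1 in M2. AE y2 in M2. W2 y1 y2 = W1 (\<psi> y1) (\<psi> y2)"
  proof -
    have "AE y1 in M2. AE y in M1. W1 (\<psi> y1) y = W2 (\<phi> (\<psi> y1)) (\<phi> y)"
      by (rule AE_distrD[OF psim]) (unfold dis2, rule AEW1)
    then show ?thesis using qp
    proof eventually_elim
      case (elim y1)
      have "AE y2 in M2. W1 (\<psi> y1) (\<psi> y2) = W2 (\<phi> (\<psi> y1)) (\<phi> (\<psi> y2))"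
        by (rule AE_distrD[OF psim]) (unfold dis2, rule elim(1))
      then show ?case using qp
        by eventually_elim (use elim(2) in simp)
    qed
  qed
  define \<Phi> where "\<Phi> = (\<lambda>(v::'b \<Rightarrow> real) x. v (\<phi> x))"
  have intt: "integrable M1 (\<lambda>x. v (\<phi> x))" if "integrable M2 v" for v :: "'b \<Rightarrow> real"
  proof -
    have "integrable (distr M1 M2 \<phi>) v" using dis that by simp
    then show ?thesis using integrable_distr_eq[OF phim borel_measurable_integrable[OF that]] by simp
  qed
  have intt2: "integrable M2 (\<lambda>x. u (\<psi> x))" if "integrable M1 u" for u :: "'a \<Rightarrow> real"
  proof -
    have "integrable (distr M2 M1 \<psi>) u" using dis2 that by simp
    then show ?thesis using integrable_distr_eq[OF psim borel_measurable_integrable[OF that]] by simp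
  qed
  have c1: "\<forall>v. integrable M2 v \<longrightarrow> integrable M1 (\<Phi> v)" using intt by (simp add: \<Phi>_def)
  have c2: "\<forall>v w. integrable M2 v \<longrightarrow> integrable M2 w \<longrightarrow> L1_dist M1 (\<Phi> v) (\<Phi> w) = L1_dist M2 v w"
  proof (intro allI impI)
    fix v w :: "'b \<Rightarrow> real" assume v: "integrable M2 v" and w: "integrable M2 w"
    have H: "(\<lambda>x. \<bar>v x - w x\<bar>) \<in> borel_measurable M2" using v w by measurable
    have "L1_dist M1 (\<Phi> v) (\<Phi> w) = (\<integral>x. \<bar>v x - w x\<bar> \<partial>distr M1 M2 \<phi>)"
      unfolding L1_dist_def \<Phi>_def by (rule integral_distr[OF phim H, symmetric])
    then show "L1_dist M1 (\<Phi> v) (\<Phi> w) = L1_dist M2 v w" using dis by (simp add: L1_dist_def)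
  qed
  have c3: "\<forall>u. integrable M1 u \<longrightarrow> (\<exists>v. integrable M2 v \<and> (AE x in M1. \<Phi> v x = u x))"
  proof (intro allI impI)
    fix u :: "'a \<Rightarrow> real" assume u: "integrable M1 u"
    show "\<exists>v. integrable M2 v \<and> (AE x in M1. \<Phi> v x = u x)"
      by (rule exI[of _ "\<lambda>y. u (\<psi> y)"]) (use intt2[OF u] pq in \<open>auto simp: \<Phi>_def\<close>)
  qed
  have c4: "\<forall>T v. gds_trajectory f g M2 W2 T v \<longrightarrow> gds_trajectory f g M1 W1 T (\<lambda>t. \<Phi> (v t))"
    using traj_transfer[OF P1 P2 Wm1 Wm2 cf cg mp AEW1] by (simp add: \<Phi>_def)
  have c5: "\<forall>T u. gds_trajectory f g M1 W1 T u \<longrightarrow>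
            (\<exists>v. gds_trajectory f g M2 W2 T v \<and> (\<forall>t\<in>T. AE x in M1. \<Phi> (v t) x = u t x))"
  proof (intro allI impI)
    fix T and u :: "real \<Rightarrow> 'a \<Rightarrow> real" assume u: "gds_trajectory f g M1 W1 T u"
    have "gds_trajectory f g M2 W2 T (\<lambda>t x. u t (\<psi> x))"
      by (rule traj_transfer[OF P2 P1 Wm2 Wm1 cf cg mq AEW2 u])
    moreover have "\<forall>t\<in>T. AE x in M1. \<Phi> (\<lambda>x. u t (\<psi> x)) x = u t x"
      using pq by (auto simp: \<Phi>_def)
    ultimately show "\<exists>v. gds_trajectory f g M2 W2 T v \<and> (\<forall>t\<in>T. AE x in M1. \<Phi> (v t) x = u t x)"
      by blast
  qed
  show ?thesis unfolding gds_isometric_def using c1 c2 c3 c4 c5 by blast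
qed

end
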